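(* Assume hypothesis (H), extend $g$ to a bounded $C^1$ function on $\mathbb{R}$, and assume $g'(K)\,h\,e^{h+1}<-1$. Then for all sufficiently small $\varepsilon>0$, every non-constant bounded solution $x:\mathbb{R}\to\mathbb{R}$ of $$\varepsilon^2x''(t)-x'(t)-x(t)+g(x(t-h))=0,\qquad t\in\mathbb{R},$$ with $x(+\infty)=K$ oscillates about $K$, i.e. for every $z\in\mathbb{R}$ the function $x-K$ takes both positive and negative values on $[z,+\infty)$.
   Context: Hypothesis (H): for $h>0$ and $g:\mathbb{R}_+\to\mathbb{R}_+$, the equation $u'(t)=-u(t)+g(u(t-h))$, $u\ge0$, has exactly two constant solutions $0$ and $K>0$; $K$ is exponentially asymptotically stable and $0$ is hyperbolic; $g\in C^1(\mathbb{R}_+,\mathbb{R}_+)$, $g$ is $C^2$ near $0$ and near $K$, and $p:=g'(0)>1$. *)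

theory Defs
  imports "HOL-Analysis.Analysis"
begin

definition dde_solution :: "(real \<Rightarrow> real) \<Rightarrow> real \<Rightarrow> (real \<Rightarrow> real) \<Rightarrow> bool" where
  "dde_solution g h u \<longleftrightarrow>
     continuous_on {-h..} u \<and> (\<forall>t\<ge>-h. u t \<ge> 0) \<and>
     (\<forall>t>0. (u has_real_derivative (- u t + g (u (t - h)))) (at t))"

definition exp_asymp_stable :: "(real \<Rightarrow> real) \<Rightarrow> real \<Rightarrow> real \<Rightarrow> bool" where
  "exp_asymp_stable g h K \<longleftrightarrow>
     (\<exists>\<delta>>0. \<exists>C \<gamma>. \<gamma> > 0 \<and>
       (\<forall>u. dde_solution g h u \<and> (\<forall>s\<in>{-h..0}. \<bar>u s - K\<bar> < \<delta>) \<longrightarrow>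
          (\<forall>t\<ge>0. \<bar>u t - K\<bar> \<le> C * exp (- \<gamma> * t) * (SUP s\<in>{-h..0}. \<bar>u s - K\<bar>))))"

text \<open>Hyperbolicity of the equilibrium 0: the characteristic equation of the
  linearization, lambda = -1 + g'(0) e^{-lambda h}, has no root on the imaginary axis.\<close>
definition hyperbolic_zero :: "(real \<Rightarrow> real) \<Rightarrow> real \<Rightarrow> bool" where
  "hyperbolic_zero g h \<longleftrightarrow>
     (\<forall>\<omega>::real. \<i> * of_real \<omega> \<noteq>
        -1 + of_real (deriv g 0) * exp (- (\<i> * of_real \<omega>) * of_real h))"

definition C2_near :: "(real \<Rightarrow> real) \<Rightarrow> real \<Rightarrow> bool" where
  "C2_near g c \<longleftrightarrow> (\<exists>\<delta>>0. \<exists>g2.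
     (\<forall>x\<in>{0..} \<inter> {c-\<delta><..<c+\<delta>}.
        (deriv g has_real_derivative g2 x) (at x within {0..} \<inter> {c-\<delta><..<c+\<delta>})) \<and>
     continuous_on ({0..} \<inter> {c-\<delta><..<c+\<delta>}) g2)"

text \<open>Hypothesis (H), for g already extended to a bounded C^1 function on the reals.\<close>
definition hypH :: "(real \<Rightarrow> real) \<Rightarrow> real \<Rightarrow> real \<Rightarrow> bool" where
  "hypH g h K \<longleftrightarrow>
     h > 0 \<and> K > 0 \<and>
     (\<forall>x\<ge>0. g x \<ge> 0) \<and>
     {c. c \<ge> 0 \<and> g c = c} = {0, K} \<and>
     exp_asymp_stable g h K \<and> hyperbolic_zero g h \<and>
     (\<forall>x. g differentiable at x) \<and> continuous_on UNIV (deriv g) \<and>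
     C2_near g 0 \<and> C2_near g K \<and> deriv g 0 > 1"

end

theory Submission
  imports Defs
begin

lemma nonincr:
  fixes f f' :: "real \<Rightarrow> real"
  assumes "\<And>t. a \<le> t \<Longrightarrow> t \<le> b \<Longrightarrow> (f has_real_derivative f' t) (at t)"
    "\<And>t. a \<le> t \<Longrightarrow> t \<le> b \<Longrightarrow> f' t \<le> 0" "a \<le> b"
  shows "f b \<le> f a"
  using DERIV_nonpos_imp_nonincreasing[of a b f] assms by blast

lemma nondecr:
  fixes f f' :: "real \<Rightarrow> real"
  assumes "\<And>t. a \<le> t \<Longrightarrow> t \<le> b \<Longrightarrow> (f has_real_derivative f' t) (at t)"
    "\<And>t. a \<le> t \<Longrightarrow> t \<le> b \<Longrightarrow> f' t \<ge> 0" "a \<le> b"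
  shows "f a \<le> f b"
  using DERIV_nonneg_imp_nondecreasing[of a b f] assms by blast

lemma exp_mul_le:
  fixes a v w :: real
  assumes "v \<le> exp (-a) * w" shows "exp a * v \<le> w"
proof -
  have "exp a * v \<le> exp a * (exp (-a) * w)" using assms by (rule mult_left_mono) simp
  also have "\<dots> = w" by (simp add: mult.assoc[symmetric] exp_add[symmetric])
  finally show ?thesis .
qed

lemma osc:
  fixes V V' :: "real \<Rightarrow> real"
  assumes h: "h > 0" and p: "p > 0" and q: "p*h*exp 1 > 1"
  and dV: "\<And>t. t \<ge> S \<Longrightarrow> (V has_real_derivative V' t) (at t)"
  and ineq: "\<And>t. t \<ge> S \<Longrightarrow> V' t \<le> - p * V (t - h)"
  and pos: "\<And>t. t \<ge> S - h \<Longrightarrow> V t > 0"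
  shows False
proof -
  have mono: "V u \<le> V t" if "S \<le> t" "t \<le> u" for t u
  proof (rule nonincr[of t u V V'])
    fix s assume "t \<le> s" "s \<le> u"
    then show "(V has_real_derivative V' s) (at s)" using dV that by auto
    have "V (s - h) > 0" using pos that \<open>t \<le> s\<close> by auto
    then have "p * V (s - h) > 0" using p by simp
    then show "V' s \<le> 0" using ineq[of s] that \<open>t \<le> s\<close> by linarith
  qed (use that in auto)
  define C where "C l \<longleftrightarrow> (\<exists>S'\<ge>S. \<forall>t u. S' \<le> t \<longrightarrow> t \<le> u \<longrightarrow> V u \<le> exp (-l*(u-t)) * V t)" for l
  have C0: "C 0" unfolding C_def using mono by auto
  have weak: "C l" if "C m" "0 \<le> l" "l \<le> m" for l m
  proof -
    from \<open>C m\<close> obtain S' where S': "S' \<ge> S" "\<forall>t u. S' \<le> t \<longrightarrow> t \<le> u \<longrightarrow> V u \<le> exp (-m*(u-t)) * V t"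
      unfolding C_def by blast
    have "V u \<le> exp (-l*(u-t)) * V t" if "S' \<le> t" "t \<le> u" for t u
    proof -
      have "exp (-m*(u-t)) \<le> exp (-l*(u-t))" using \<open>l \<le> m\<close> that
        by (simp add: mult_right_mono)
      moreover have "V t > 0" using pos that S' h by auto
      ultimately show ?thesis using S'(2) that
        by (smt (verit) mult_right_mono)
    qed
    then show ?thesis unfolding C_def using S' by blast
  qed
  have step: "C (p * exp (l*h))" if "C l" "0 \<le> l" for l
  proof -
    from \<open>C l\<close> obtain S' where S': "S' \<ge> S" "\<forall>t u. S' \<le> t \<longrightarrow> t \<le> u \<longrightarrow> V u \<le> exp (-l*(u-t)) * V t"
      unfolding C_def by blast
    define m where "m = p * exp (l*h)"
    have key: "V' t \<le> - m * V t" if "t \<ge> S' + h" for t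
    proof -
      have "V t \<le> exp (-l*h) * V (t-h)" using S'(2)[rule_format, of "t-h" t] that h by auto
      hence "exp (l*h) * V t \<le> V (t - h)"
        using exp_mul_le[of "V t" "l*h" "V (t-h)"] by simp
      hence "p * (exp (l*h) * V t) \<le> p * V (t-h)" using p by simp
      then show ?thesis using ineq[of t] that S' h unfolding m_def by (simp add: algebra_simps)
    qed
    have "V u \<le> exp (-m*(u-t)) * V t" if "S' + h \<le> t" "t \<le> u" for t u
    proof -
      have "(\<lambda>s. exp (m* s) * V s) u \<le> (\<lambda>s. exp (m* s) * V s) t"
      proof (rule nonincr[where f = "\<lambda>s. exp (m* s) * V s" and f' = "\<lambda>s. exp (m* s) * V' s + m * exp (m* s) * V s"])
        fix s assume s: "t \<le> s" "s \<le> u"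
        show "((\<lambda>s. exp (m* s) * V s) has_real_derivative exp (m* s) * V' s + m * exp (m* s) * V s) (at s)"
          using dV[of s] s that S' h
          by (auto intro!: derivative_eq_intros simp: algebra_simps)
        have "exp (m* s) * V' s \<le> exp (m* s) * (- m * V s)" using key[of s] s that by (intro mult_left_mono) auto
        then show "exp (m* s) * V' s + m * exp (m* s) * V s \<le> 0" by (simp add: algebra_simps)
      qed (use that in auto)
      hence E: "exp (m*u) * V u \<le> exp (m*t) * V t" by simp
      have "V u = exp (-(m*u)) * (exp (m*u) * V u)" by (simp add: mult.assoc[symmetric] exp_add[symmetric])
      also have "\<dots> \<le> exp (-(m*u)) * (exp (m*t) * V t)" using E by (rule mult_left_mono) simp
      also have "\<dots> = exp (-(m*u) + m*t) * V t" by (simp only: mult.assoc[symmetric] exp_add)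
      also have "-(m*u) + m*t = -m*(u-t)" by (simp add: algebra_simps)
      finally show ?thesis .
    qed
    then show ?thesis unfolding C_def m_def using S' h
      by (intro exI[of _ "S' + h"]) auto
  qed
  define Q where "Q = p*h*exp 1"
  have qstep: "C (Q * l)" if "C l" "0 \<le> l" for l
  proof -
    have "l*h \<le> exp (l*h - 1)" using exp_ge_add_one_self[of "l*h - 1"] by simp
    hence "exp 1 * (l*h) \<le> exp 1 * exp (l*h - 1)" by simp
    hence "exp 1 * (l*h) \<le> exp (l*h)" by (simp add: exp_add[symmetric])
    hence "p * (exp 1 * (l*h)) \<le> p * exp (l*h)" using p by simp
    hence "Q * l \<le> p * exp (l*h)" unfolding Q_def by (simp add: algebra_simps)
    moreover have "0 \<le> Q * l" unfolding Q_def using p h that by simp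
    ultimately show ?thesis using weak step that by blast
  qed
  have Cn: "C (p * Q^n)" for n
  proof (induction n)
    case 0 then show ?case using step[OF C0] by simp
  next
    case (Suc n)
    have "0 \<le> p * Q^n" unfolding Q_def using p h by simp
    from qstep[OF Suc this] show ?case by (simp add: algebra_simps)
  qed
  define L where "L = 4 / (p * h^2)"
  obtain n where n: "L / p < Q^n" using real_arch_pow[of Q "L/p"] q unfolding Q_def by auto
  have "L \<le> p * Q^n" using n p by (simp add: field_simps)
  moreover have "L \<ge> 0" unfolding L_def using p h by simp
  ultimately have CL: "C L" using weak Cn by blast
  then obtain S' where S': "S' \<ge> S" "\<forall>t u. S' \<le> t \<longrightarrow> t \<le> u \<longrightarrow> V u \<le> exp (-L*(u-t)) * V t"
    unfolding C_def by blast
  define t where "t = max S' S + h"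
  have int: "(\<lambda>s. V s + p * V (t - h/2) * s) (t + h/2) \<le> (\<lambda>s. V s + p * V (t - h/2) * s) t"
  proof (rule nonincr[where f = "\<lambda>s. V s + p * V (t - h/2) * s" and f' = "\<lambda>s. V' s + p * V (t - h/2)"])
    fix s assume s: "t \<le> s" "s \<le> t + h/2"
    show "((\<lambda>s. V s + p * V (t - h/2) * s) has_real_derivative V' s + p * V (t - h/2)) (at s)"
      using dV[of s] s h unfolding t_def by (auto intro!: derivative_eq_intros)
    have "V (t - h/2) \<le> V (s - h)" using mono[of "s-h" "t - h/2"] s h unfolding t_def by auto
    then have "p * V (t - h/2) \<le> p * V (s - h)" using p by simp
    moreover have "V' s \<le> - p * V (s - h)" using ineq[of s] s h unfolding t_def by simp
    ultimately show "V' s + p * V (t - h/2) \<le> 0" by simp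
  qed (use h in auto)
  have p1: "V (t + h/2) > 0" using pos h unfolding t_def by auto
  have p2: "V t > 0" using pos h unfolding t_def by auto
  have A: "p * (h/2) * V (t - h/2) < V t" using int p1 by (simp add: algebra_simps)
  have "V t \<le> exp (-L*(h/2)) * V (t - h/2)" using S'(2)[rule_format, of "t-h/2" t] h unfolding t_def by auto
  hence B: "exp (L*(h/2)) * V t \<le> V (t - h/2)"
    using exp_mul_le[of "V t" "L*(h/2)" "V (t-h/2)"] by simp
  have "L*(h/2) \<le> exp (L*(h/2))" using exp_ge_add_one_self[of "L*(h/2)"] by linarith
  hence "L*(h/2) * V t \<le> exp (L*(h/2)) * V t" using p2 by (simp add: mult_right_mono)
  hence "L*(h/2) * V t \<le> V (t - h/2)" using B by simp
  hence "p*(h/2) * (L*(h/2) * V t) \<le> p*(h/2) * V (t - h/2)" using p h by (simp add: mult_left_mono)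
  moreover have "p*(h/2) * (L*(h/2) * V t) = V t" unfolding L_def using p h by (simp add: field_simps power2_eq_square)
  ultimately show False using A by linarith
qed

lemma phi_deriv:
  fixes y' y'' F :: "real \<Rightarrow> real"
  assumes a: "a > 0" and d: "(y' has_real_derivative y'' r) (at r)"
    and eq: "a * y'' r - y' r = F r"
  shows "((\<lambda>r. exp (-r/a) * y' r + c * exp (-r/a)) has_real_derivative exp (-r/a) * (F r - c) / a) (at r)"
  using a by (auto intro!: derivative_eq_intros d simp: eq[symmetric] field_simps)

lemma y_decr:
  fixes y y' y'' F :: "real \<Rightarrow> real"
  assumes a: "a > 0"
    and dy: "\<And>t. (y has_real_derivative y' t) (at t)"
    and dy': "\<And>t. (y' has_real_derivative y'' t) (at t)"
    and eq: "\<And>t. t \<ge> T \<Longrightarrow> a * y'' t - y' t = F t"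
    and Fpos: "\<And>t. t \<ge> T \<Longrightarrow> F t \<ge> 0"
    and bnd: "\<And>t. \<bar>y t\<bar> \<le> M"
    and s0: "s0 \<ge> T"
  shows "y' s0 \<le> 0"
proof (rule ccontr)
  assume "\<not> y' s0 \<le> 0"
  hence p: "y' s0 > 0" by simp
  have ge: "y' s \<ge> y' s0" if "s \<ge> s0" for s
  proof -
    have "(\<lambda>r. exp (-r/a) * y' r + 0 * exp (-r/a)) s0 \<le> (\<lambda>r. exp (-r/a) * y' r + 0 * exp (-r/a)) s"
    proof (rule nondecr[where f = "\<lambda>r. exp (-r/a) * y' r + 0 * exp (-r/a)" and f' = "\<lambda>r. exp (-r/a) * (F r - 0) / a"])
      fix r assume "s0 \<le> r" "r \<le> s"
      then show "((\<lambda>r. exp (-r/a) * y' r + 0 * exp (-r/a)) has_real_derivative exp (-r/a) * (F r - 0) / a) (at r)"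
      proof -
        have "a * y'' r - y' r = F r" using eq s0 \<open>s0 \<le> r\<close> by simp
        from phi_deriv[where y'=y' and y''=y'' and F=F and r=r and c=0, OF a dy'[of r] this] show ?thesis .
      qed
      show "exp (-r/a) * (F r - 0) / a \<ge> 0" using Fpos[of r] a s0 \<open>s0 \<le> r\<close> by simp
    qed (use that in auto)
    hence A: "exp (-s0/a) * y' s0 \<le> exp (-s/a) * y' s" by simp
    have "exp (-s/a) \<le> exp (-s0/a)" using that a by (simp add: divide_right_mono)
    hence "exp (-s/a) * y' s0 \<le> exp (-s0/a) * y' s0" using p by (simp add: mult_right_mono)
    hence "exp (-s/a) * y' s0 \<le> exp (-s/a) * y' s" using A by linarith
    then show ?thesis by simp
  qed
  define s1 where "s1 = s0 + (2*M+1) / y' s0"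
  have "s0 \<le> s1" unfolding s1_def using p bnd[of 0] by simp
  have "(\<lambda>r. y r - y' s0 * r) s0 \<le> (\<lambda>r. y r - y' s0 * r) s1"
  proof (rule nondecr[where f = "\<lambda>r. y r - y' s0 * r" and f' = "\<lambda>r. y' r - y' s0"])
    fix r assume "s0 \<le> r" "r \<le> s1"
    show "((\<lambda>r. y r - y' s0 * r) has_real_derivative y' r - y' s0) (at r)"
      by (rule derivative_eq_intros dy refl | simp)+
    show "y' r - y' s0 \<ge> 0" using ge[OF \<open>s0 \<le> r\<close>] by simp
  qed fact
  hence "y s1 \<ge> y s0 + y' s0 * (s1 - s0)" by (simp add: algebra_simps)
  also have "y' s0 * (s1 - s0) = 2*M+1" unfolding s1_def using p by simp
  finally show False using bnd[of s1] bnd[of s0] by linarith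
qed

lemma y'_lower:
  fixes y y' y'' F :: "real \<Rightarrow> real"
  assumes a: "a > 0"
    and dy: "\<And>t. (y has_real_derivative y' t) (at t)"
    and dy': "\<And>t. (y' has_real_derivative y'' t) (at t)"
    and eq: "\<And>t. t \<ge> T \<Longrightarrow> a * y'' t - y' t = F t"
    and Fb: "\<And>r. r \<ge> s \<Longrightarrow> F r \<le> Mx"
    and Mx: "Mx \<ge> 0"
    and bnd: "\<And>t. \<bar>y t\<bar> \<le> M"
    and s: "s \<ge> T"
  shows "y' s \<ge> - Mx"
proof (rule ccontr)
  assume "\<not> y' s \<ge> - Mx"
  hence neg: "y' s + Mx < 0" by simp
  define d where "d = - (exp (-s/a) * y' s + Mx * exp (-s/a))"
  have "d = - ((y' s + Mx) * exp (-s/a))" unfolding d_def by (simp add: algebra_simps)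
  moreover have "(y' s + Mx) * exp (-s/a) < 0" using neg by (simp add: mult_neg_pos)
  ultimately have d: "d > 0" by simp
  define c0 where "c0 = d * exp (s/a)"
  have c0: "c0 > 0" unfolding c0_def using d by simp
  have le: "y' r \<le> - c0" if "r \<ge> s" for r
  proof -
    have "(\<lambda>r. exp (-r/a) * y' r + Mx * exp (-r/a)) r \<le> (\<lambda>r. exp (-r/a) * y' r + Mx * exp (-r/a)) s"
    proof (rule nonincr[where f = "\<lambda>r. exp (-r/a) * y' r + Mx * exp (-r/a)" and f' = "\<lambda>r. exp (-r/a) * (F r - Mx) / a"])
      fix q assume "s \<le> q" "q \<le> r"
      then show "((\<lambda>r. exp (-r/a) * y' r + Mx * exp (-r/a)) has_real_derivative exp (-q/a) * (F q - Mx) / a) (at q)"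
      proof -
        have "a * y'' q - y' q = F q" using eq s \<open>s \<le> q\<close> by simp
        from phi_deriv[where y'=y' and y''=y'' and F=F and r=q and c=Mx, OF a dy'[of q] this] show ?thesis .
      qed
      have "F q - Mx \<le> 0" using Fb[of q] \<open>s \<le> q\<close> by simp
      then show "exp (-q/a) * (F q - Mx) / a \<le> 0" using a
        by (simp add: divide_nonpos_pos mult_nonneg_nonpos)
    qed (use that in auto)
    hence "exp (-r/a) * y' r + Mx * exp (-r/a) \<le> exp (-s/a) * y' s + Mx * exp (-s/a)" by simp
    moreover have "Mx * exp (-r/a) \<ge> 0" using Mx by simp
    ultimately have "exp (-r/a) * y' r \<le> - d" unfolding d_def by linarith
    hence "exp (r/a) * (exp (-r/a) * y' r) \<le> exp (r/a) * (- d)" by (rule mult_left_mono) simp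
    moreover have e: "exp (r/a) * exp (-r/a) = 1" by (simp add: exp_add[symmetric])
    have "exp (r/a) * (exp (-r/a) * y' r) = y' r" by (simp only: mult.assoc[symmetric] e)
    ultimately have "y' r \<le> exp (r/a) * (- d)" by linarith
    hence "y' r \<le> - (d * exp (r/a))" by (simp add: mult.commute)
    moreover have "d * exp (s/a) \<le> d * exp (r/a)" using d that a by (simp add: divide_right_mono)
    ultimately show ?thesis unfolding c0_def by linarith
  qed
  define s1 where "s1 = s + (2*M+1) / c0"
  have "s \<le> s1" unfolding s1_def using c0 bnd[of 0] by simp
  have "(\<lambda>r. y r + c0 * r) s1 \<le> (\<lambda>r. y r + c0 * r) s"
  proof (rule nonincr[where f = "\<lambda>r. y r + c0 * r" and f' = "\<lambda>r. y' r + c0"])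
    fix r assume "s \<le> r" "r \<le> s1"
    show "((\<lambda>r. y r + c0 * r) has_real_derivative y' r + c0) (at r)"
      by (rule derivative_eq_intros dy refl | simp)+
    show "y' r + c0 \<le> 0" using le[OF \<open>s \<le> r\<close>] by simp
  qed fact
  hence "y s1 \<le> y s - c0 * (s1 - s)" by (simp add: algebra_simps)
  also have "c0 * (s1 - s) = 2*M+1" unfolding s1_def using c0 by simp
  finally show False using bnd[of s1] bnd[of s] by linarith
qed

lemma y'_upper:
  fixes y y' y'' F :: "real \<Rightarrow> real"
  assumes a: "a > 0"
    and dy': "\<And>t. (y' has_real_derivative y'' t) (at t)"
    and eq: "\<And>t. t \<ge> T \<Longrightarrow> a * y'' t - y' t = F t"
    and Fb: "\<And>r. s \<le> r \<Longrightarrow> r \<le> s + \<delta> \<Longrightarrow> m \<le> F r"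
    and nd: "y' (s + \<delta>) \<le> 0" and m: "m \<ge> 0" and \<delta>: "\<delta> \<ge> 0"
    and s: "s \<ge> T"
  shows "y' s \<le> - m * (1 - exp (-\<delta>/a))"
proof -
  have "(\<lambda>r. exp (-r/a) * y' r + m * exp (-r/a)) s \<le> (\<lambda>r. exp (-r/a) * y' r + m * exp (-r/a)) (s+\<delta>)"
  proof (rule nondecr[where f = "\<lambda>r. exp (-r/a) * y' r + m * exp (-r/a)" and f' = "\<lambda>r. exp (-r/a) * (F r - m) / a"])
    fix q assume "s \<le> q" "q \<le> s + \<delta>"
    then show "((\<lambda>r. exp (-r/a) * y' r + m * exp (-r/a)) has_real_derivative exp (-q/a) * (F q - m) / a) (at q)"
    proof -
      have "a * y'' q - y' q = F q" using eq s \<open>s \<le> q\<close> by simp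
      from phi_deriv[where y'=y' and y''=y'' and F=F and r=q and c=m, OF a dy'[of q] this] show ?thesis .
    qed
    have "F q - m \<ge> 0" using Fb[of q] \<open>s \<le> q\<close> \<open>q \<le> s + \<delta>\<close> by simp
    then show "exp (-q/a) * (F q - m) / a \<ge> 0" using a by simp
  qed (use \<delta> in auto)
  hence A: "exp (-s/a) * y' s + m * exp (-s/a) \<le> exp (-(s+\<delta>)/a) * y' (s+\<delta>) + m * exp (-(s+\<delta>)/a)"
    by simp
  have "exp (-(s+\<delta>)/a) * y' (s+\<delta>) \<le> 0" using nd by (simp add: mult_nonneg_nonpos)
  moreover have "exp (-(s+\<delta>)/a) = exp (-s/a) * exp (-\<delta>/a)"
    using a by (simp add: exp_add[symmetric] field_simps)
  ultimately have "exp (-s/a) * (y' s + m - m * exp (-\<delta>/a)) \<le> 0" using A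
    by (simp add: algebra_simps)
  hence "y' s + m - m * exp (-\<delta>/a) \<le> 0" by (simp add: mult_le_0_iff)
  then show ?thesis by (simp add: algebra_simps)
qed

lemma core:
  fixes y y' y'' G :: "real \<Rightarrow> real"
  assumes h: "h > 0" and a: "a > 0" and \<beta>: "\<beta> > 0" and B: "B \<ge> 0"
    and dy: "\<And>t. (y has_real_derivative y' t) (at t)"
    and dy': "\<And>t. (y' has_real_derivative y'' t) (at t)"
    and eq: "\<And>t. t \<ge> T \<Longrightarrow> a * y'' t - y' t = y t + G t"
    and Gl: "\<And>t. t \<ge> T \<Longrightarrow> \<beta> * y (t - h) \<le> G t"
    and Gu: "\<And>t. t \<ge> T \<Longrightarrow> G t \<le> B * y (t - h)"
    and nn: "\<And>t. t \<ge> T - h \<Longrightarrow> y t \<ge> 0"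
    and pos: "\<And>t. t \<ge> T \<Longrightarrow> y t > 0"
    and bnd: "\<And>t. \<bar>y t\<bar> \<le> M"
    and sm1: "exp (-(h/4)/a) \<le> 1/2"
    and sm2: "(1/(1 + a*(1 + B*(8/(\<beta>*h))^2))) * \<beta> * exp ((1/(1 + a*(1 + B*(8/(\<beta>*h))^2))) * h) * h * exp 1 > 1"
  shows False
proof -
  define F where "F t = y t + G t" for t
  have eqF: "\<And>t. t \<ge> T \<Longrightarrow> a * y'' t - y' t = F t" using eq unfolding F_def by simp
  have Fpos: "F t \<ge> 0" if "t \<ge> T" for t
  proof -
    have "\<beta> * y (t - h) \<ge> 0" using nn[of "t-h"] that \<beta> by simp
    then show ?thesis unfolding F_def using Gl[OF that] pos[OF that] by simp
  qed
  have D: "y' t \<le> 0" if "t \<ge> T" for t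
    using y_decr[of a y y' y'' T F M t, OF a dy dy' eqF Fpos bnd that] .
  have mono: "y u \<le> y s" if "T \<le> s" "s \<le> u" for s u
    by (rule nonincr[of s u y y']) (use dy D that in auto)
  have up: "y' s \<le> -(\<beta>/2) * y (s - 3*h/4)" if "s \<ge> T + h" for s
  proof -
    have m0: "\<beta> * y (s + h/4 - h) \<ge> 0" using nn[of "s + h/4 - h"] that \<beta> h by simp
    have Fb: "\<beta> * y (s + h/4 - h) \<le> F r" if "s \<le> r" "r \<le> s + h/4" for r
    proof -
      have "y (s + h/4 - h) \<le> y (r - h)" using mono[of "r - h" "s + h/4 - h"] that \<open>s \<ge> T + h\<close> by simp
      hence "\<beta> * y (s + h/4 - h) \<le> \<beta> * y (r - h)" using \<beta> by simp
      also have "\<dots> \<le> G r" using Gl[of r] that \<open>s \<ge> T + h\<close> h by simp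
      also have "\<dots> \<le> F r" unfolding F_def using pos[of r] that \<open>s \<ge> T + h\<close> h by simp
      finally show ?thesis .
    qed
    have "y' s \<le> - (\<beta> * y (s + h/4 - h)) * (1 - exp (-(h/4)/a))"
      by (rule y'_upper[OF a dy' eqF Fb]) (use D that h m0 in auto)
    also have "\<dots> \<le> - (\<beta> * y (s + h/4 - h)) * (1/2)"
      using sm1 m0 by (intro mult_left_mono_neg) auto
    also have "s + h/4 - h = s - 3*h/4" by simp
    finally show ?thesis by simp
  qed
  have ratio1: "(\<beta>*h/8) * y (t - h/2) \<le> y t" if "t \<ge> T + h" for t
  proof -
    have "(\<lambda>s. y s + (\<beta>/2) * y (t - h/2) * s) (t + h/4) \<le> (\<lambda>s. y s + (\<beta>/2) * y (t - h/2) * s) t"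
    proof (rule nonincr[where f = "\<lambda>s. y s + (\<beta>/2) * y (t - h/2) * s" and f' = "\<lambda>s. y' s + (\<beta>/2) * y (t - h/2)"])
      fix s assume s: "t \<le> s" "s \<le> t + h/4"
      show "((\<lambda>s. y s + (\<beta>/2) * y (t - h/2) * s) has_real_derivative y' s + (\<beta>/2) * y (t - h/2)) (at s)"
        by (rule derivative_eq_intros dy refl | simp)+
      have "y (t - h/2) \<le> y (s - 3*h/4)" using mono[of "s - 3*h/4" "t - h/2"] s that h by simp
      hence "(\<beta>/2) * y (t - h/2) \<le> (\<beta>/2) * y (s - 3*h/4)" using \<beta> by simp
      moreover have "y' s \<le> -(\<beta>/2) * y (s - 3*h/4)" using up[of s] s that by simp
      ultimately show "y' s + (\<beta>/2) * y (t - h/2) \<le> 0" by simp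
    qed (use h in auto)
    hence E: "y (t + h/4) + (\<beta>/2) * y (t - h/2) * (t + h/4) \<le> y t + (\<beta>/2) * y (t - h/2) * t" by simp
    have "(\<beta>/2) * y (t - h/2) * (t + h/4) = (\<beta>/2) * y (t - h/2) * t + (\<beta>*h/8) * y (t - h/2)"
      by (simp add: algebra_simps)
    hence "y (t + h/4) + (\<beta>*h/8) * y (t - h/2) \<le> y t" using E by linarith
    moreover have "y (t + h/4) > 0" using pos[of "t + h/4"] that h by simp
    ultimately show ?thesis by simp
  qed
  define R where "R = (8/(\<beta>*h))^2"
  have R: "R \<ge> 0" unfolding R_def by simp
  have ratio: "y (t - h) \<le> R * y t" if "t \<ge> T + 2*h" for t
  proof -
    have k: "\<beta>*h/8 > 0" using \<beta> h by simp
    have A: "(\<beta>*h/8) * y (t - h/2 - h/2) \<le> y (t - h/2)" using ratio1[of "t - h/2"] that h by simp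
    have "(\<beta>*h/8) * ((\<beta>*h/8) * y (t - h)) \<le> (\<beta>*h/8) * y (t - h/2)"
      using A k by (intro mult_left_mono) (auto simp: algebra_simps)
    also have "\<dots> \<le> y t" using ratio1[of t] that h by simp
    finally have "(\<beta>*h/8)^2 * y (t - h) \<le> y t" by (simp add: power2_eq_square algebra_simps)
    hence "R * ((\<beta>*h/8)^2 * y (t - h)) \<le> R * y t" using R by (rule mult_left_mono)
    moreover have "R * (\<beta>*h/8)^2 = 1" unfolding R_def using \<beta> h by (simp add: field_simps power2_eq_square)
    ultimately show ?thesis by (simp add: mult.assoc[symmetric])
  qed
  have low: "- y' t \<le> y t + B * y (t - h)" if "t \<ge> T + h" for t
  proof -
    have Fb: "F r \<le> y t + B * y (t - h)" if "r \<ge> t" for r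
    proof -
      have "y r \<le> y t" using mono[of t r] that \<open>t \<ge> T + h\<close> h by simp
      moreover have "y (r - h) \<le> y (t - h)" using mono[of "t-h" "r-h"] that \<open>t \<ge> T + h\<close> by simp
      hence "B * y (r - h) \<le> B * y (t - h)" using B by (simp add: mult_left_mono)
      moreover have "G r \<le> B * y (r - h)" using Gu[of r] that \<open>t \<ge> T + h\<close> h by simp
      ultimately show ?thesis unfolding F_def by simp
    qed
    have "y t + B * y (t - h) \<ge> 0" using pos[of t] nn[of "t - h"] B that h by simp
    from y'_lower[where s=t and T=T and Mx="y t + B * y (t - h)", OF a dy dy' eqF Fb this bnd] show ?thesis using that h by simp
  qed
  define A where "A = 1 + B * R"
  define \<kappa> where "\<kappa> = 1 / (1 + a * A)"
  have A: "A \<ge> 1" unfolding A_def using B R by simp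
  have "A > 0" using A by linarith
  hence aA0: "a * A > 0" using a by simp
  hence aA: "1 + a * A > 0" by linarith
  have \<kappa>0: "\<kappa> > 0" unfolding \<kappa>_def using aA by simp
  define W where "W t = y t - a * y' t" for t
  have Wy: "y t \<le> W t" if "t \<ge> T" for t unfolding W_def using D[OF that] a by (simp add: mult_nonneg_nonpos)
  have Wub: "\<kappa> * W t \<le> y t" if "t \<ge> T + 2*h" for t
  proof -
    have "- y' t \<le> y t + B * y (t - h)" using low[of t] that h by simp
    also have "B * y (t - h) \<le> B * (R * y t)" using ratio[OF that] B by (simp add: mult_left_mono)
    finally have "- y' t \<le> A * y t" unfolding A_def by (simp add: algebra_simps)
    hence "a * (- y' t) \<le> a * (A * y t)" by (rule mult_left_mono) (use a in auto)
    hence "W t \<le> (1 + a * A) * y t" unfolding W_def by (simp add: algebra_simps)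
    hence "\<kappa> * W t \<le> \<kappa> * ((1 + a * A) * y t)" using \<kappa>0 by simp
    also have "\<kappa> * ((1 + a * A) * y t) = y t" unfolding \<kappa>_def using aA by (simp add: field_simps)
    finally show ?thesis .
  qed
  define p where "p = \<kappa> * \<beta> * exp (\<kappa> * h)"
  define V where "V t = exp (\<kappa> * t) * W t" for t
  define V' where "V' t = exp (\<kappa> * t) * (\<kappa> * W t - y t - G t)" for t
  have dV: "(V has_real_derivative V' t) (at t)" if "t \<ge> T + 3*h" for t
  proof -
    have dW: "(W has_real_derivative (y' t - a * y'' t)) (at t)" unfolding W_def
      by (rule derivative_eq_intros dy dy' refl | simp)+
    have "(V has_real_derivative exp (\<kappa> * t) * \<kappa> * W t + exp (\<kappa> * t) * (y' t - a * y'' t)) (at t)"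
      unfolding V_def[abs_def] by (rule derivative_eq_intros dW refl | simp)+
    moreover have "y' t - a * y'' t = - (y t + G t)" using eq[of t] that h by simp
    ultimately show ?thesis unfolding V'_def by (simp add: algebra_simps)
  qed
  have ineq: "V' t \<le> - p * V (t - h)" if "t \<ge> T + 3*h" for t
  proof -
    have "\<kappa> * W t - y t \<le> 0" using Wub[of t] that h by simp
    moreover have "\<beta> * (\<kappa> * W (t - h)) \<le> G t"
    proof -
      have "\<kappa> * W (t - h) \<le> y (t - h)" using Wub[of "t-h"] that by simp
      hence "\<beta> * (\<kappa> * W (t - h)) \<le> \<beta> * y (t - h)" using \<beta> by simp
      also have "\<dots> \<le> G t" using Gl[of t] that h by simp
      finally show ?thesis .
    qed
    ultimately have "\<kappa> * W t - y t - G t \<le> - (\<beta> * \<kappa> * W (t - h))" by simp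
    hence "V' t \<le> exp (\<kappa> * t) * (- (\<beta> * \<kappa> * W (t - h)))" unfolding V'_def
      by (rule mult_left_mono) simp
    also have "exp (\<kappa> * t) = exp (\<kappa> * h) * exp (\<kappa> * (t - h))"
      by (simp add: exp_add[symmetric] algebra_simps)
    finally show ?thesis unfolding p_def V_def by (simp add: algebra_simps)
  qed
  have Vpos: "V t > 0" if "t \<ge> T + 3*h - h" for t
  proof -
    have "W t > 0" using Wy[of t] pos[of t] that h by simp
    then show ?thesis unfolding V_def by simp
  qed
  have p0: "p > 0" unfolding p_def using \<kappa>0 \<beta> by simp
  have q: "p * h * exp 1 > 1" using sm2 unfolding p_def \<kappa>_def A_def R_def by simp
  show False by (rule osc[OF h p0 q dV ineq Vpos])
qed

lemma const_back:
  fixes x x' x'' g :: "real \<Rightarrow> real"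
  assumes h: "h > 0" and \<eta>: "\<eta> > 0"
    and iso: "\<And>c. g c = K \<Longrightarrow> \<bar>c - K\<bar> < \<eta> \<Longrightarrow> c = K"
    and dx: "\<And>t. (x has_real_derivative x' t) (at t)"
    and dx': "\<And>t. (x' has_real_derivative x'' t) (at t)"
    and eq: "\<And>t. a * x'' t - x' t - x t + g (x (t - h)) = 0"
    and c: "\<And>t. t > s \<Longrightarrow> x t = K"
  shows "\<And>t. t > s - h \<Longrightarrow> x t = K"
proof -
  have x'0: "x' t = 0" if "t > s" for t
  proof -
    have "((\<lambda>_. K) has_real_derivative 0) (at t)" by simp
    hence "(x has_real_derivative 0) (at t)"
      by (rule has_field_derivative_transform_within_open[where S = "{s<..}"]) (use that c in auto)
    then show ?thesis using dx[of t] DERIV_unique by blast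
  qed
  have x''0: "x'' t = 0" if "t > s" for t
  proof -
    have "((\<lambda>_. 0) has_real_derivative 0) (at t)" by simp
    hence "(x' has_real_derivative 0) (at t)"
      by (rule has_field_derivative_transform_within_open[where S = "{s<..}"]) (use that x'0 in auto)
    then show ?thesis using dx'[of t] DERIV_unique by blast
  qed
  have gK: "g (x r) = K" if "r > s - h" for r
  proof -
    have "a * x'' (r + h) - x' (r + h) - x (r + h) + g (x (r + h - h)) = 0" by (rule eq)
    then show ?thesis using x'0[of "r+h"] x''0[of "r+h"] c[of "r+h"] that by simp
  qed
  have cont: "continuous_on S x" for S
    using dx by (intro continuous_at_imp_continuous_on) (auto intro: DERIV_isCont)
  fix t assume t: "t > s - h"
  show "x t = K"
  proof (cases "t > s")
    case True then show ?thesis using c by simp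
  next
    case False
    show ?thesis
    proof (rule ccontr)
      assume ne: "x t \<noteq> K"
      have xs: "x (s+1) = K" using c by simp
      have ts: "t \<le> s + 1" using False by simp
      consider "\<bar>x t - K\<bar> < \<eta>" | "x t \<ge> K + \<eta>" | "x t \<le> K - \<eta>" by linarith
      then show False
      proof cases
        case 1 then show False using iso gK t ne by blast
      next
        case 2
        obtain r where r: "t \<le> r" "r \<le> s + 1" "x r = K + \<eta>/2"
          using IVT2'[of x "s+1" "K + \<eta>/2" t, OF _ _ ts cont] xs 2 \<eta> by auto
        have "g (x r) = K" by (rule gK) (use t r in linarith)
        then have "x r = K" using iso[of "x r"] r \<eta> by simp
        then show False using r \<eta> by simp
      next
        case 3
        obtain r where r: "t \<le> r" "r \<le> s + 1" "x r = K - \<eta>/2"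
          using IVT'[of x t "K - \<eta>/2" "s+1", OF _ _ ts cont] xs 3 \<eta> by auto
        have "g (x r) = K" by (rule gK) (use t r in linarith)
        then have "x r = K" using iso[of "x r"] r \<eta> by simp
        then show False using r \<eta> by simp
      qed
    qed
  qed
qed

lemma const_all:
  fixes x x' x'' g :: "real \<Rightarrow> real"
  assumes h: "h > 0" and \<eta>: "\<eta> > 0"
    and iso: "\<And>c. g c = K \<Longrightarrow> \<bar>c - K\<bar> < \<eta> \<Longrightarrow> c = K"
    and dx: "\<And>t. (x has_real_derivative x' t) (at t)"
    and dx': "\<And>t. (x' has_real_derivative x'' t) (at t)"
    and eq: "\<And>t. a * x'' t - x' t - x t + g (x (t - h)) = 0"
    and c: "\<And>t. t > s \<Longrightarrow> x t = K"
  shows "x t = K"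
proof -
  have n: "\<And>t. t > s - real n * h \<Longrightarrow> x t = K" for n
  proof (induction n)
    case 0 then show ?case using c by simp
  next
    case (Suc n)
    have "x t = K" if "t > (s - real n * h) - h" for t
      by (rule const_back[OF h \<eta> iso dx dx' eq Suc.IH]) (use that in auto)
    then show ?case using Suc.prems by (simp add: algebra_simps)
  qed
  obtain n where "(s - t) / h < real n" using reals_Archimedean2 by blast
  hence "s - t < real n * h" using h by (simp add: field_simps)
  then show ?thesis using n[of n t] by simp
qed

lemma small:
  fixes a A \<beta> h Q :: real
  assumes h: "h > 0" and \<beta>: "\<beta> > 0" and A: "A \<ge> 1" and a: "a > 0"
    and Q: "Q = \<beta> * h * exp (h + 1)" "Q > 1"
    and sm: "a * A * (1 + h) < 1 - 1/Q"
  shows "(1/(1 + a*A)) * \<beta> * exp ((1/(1 + a*A)) * h) * h * exp 1 > 1"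
proof -
  define k where "k = 1/(1 + a*A)"
  have aA: "a * A > 0" using a A by simp
  have k0: "k > 0" unfolding k_def using aA by simp
  have k1: "k \<ge> 1 - a*A"
  proof -
    have "(1 - a*A) * (1 + a*A) = 1 - (a*A)^2" by (simp add: algebra_simps power2_eq_square)
    hence "(1 - a*A) * (1 + a*A) \<le> 1" using zero_le_power2[of "a*A"] by linarith
    then show ?thesis unfolding k_def using aA by (simp add: field_simps)
  qed
  have k2: "1 - k \<le> a*A"
  proof -
    have "1 - k = a*A / (1 + a*A)" unfolding k_def using aA by (simp add: field_simps)
    also have "\<dots> \<le> a*A"
    proof -
      have "(a*A)*(a*A) \<ge> 0" by simp
      hence "a*A \<le> a*A*(1+a*A)" by (simp add: algebra_simps)
      then show ?thesis using aA by (simp add: pos_divide_le_eq)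
    qed
    finally show ?thesis .
  qed
  have e1: "exp (k*h) \<ge> exp h * (1 - a*A*h)"
  proof -
    have "exp (k*h) = exp h * exp (-(1-k)*h)" by (simp add: exp_add[symmetric] algebra_simps)
    moreover have "exp (-(1-k)*h) \<ge> 1 - (1-k)*h" using exp_ge_add_one_self[of "-(1-k)*h"] by linarith
    moreover have "1 - (1-k)*h \<ge> 1 - a*A*h" using k2 h by (simp add: mult_right_mono)
    ultimately show ?thesis by (smt (verit) exp_gt_zero mult_left_mono)
  qed
  have p1: "1 - a*A \<ge> 0" and p2: "1 - a*A*h \<ge> 0"
  proof -
    have "1/Q > 0" using Q by simp
    hence "a*A*(1+h) < 1" using sm by linarith
    moreover have "a*A*(1+h) = a*A + a*A*h" by (simp add: algebra_simps)
    moreover have "a*A*h > 0" using aA h by simp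
    ultimately show "1 - a*A \<ge> 0" "1 - a*A*h \<ge> 0" using aA by linarith+
  qed
  have "k * exp (k*h) \<ge> (1 - a*A) * (exp h * (1 - a*A*h))"
    using k1 e1 p1 p2 k0 by (intro mult_mono) auto
  moreover have "(1 - a*A) * (1 - a*A*h) \<ge> 1 - a*A*(1+h)"
  proof -
    have "(1 - a*A) * (1 - a*A*h) = 1 - a*A*(1+h) + (a*A)*(a*A*h)" by (simp add: algebra_simps)
    moreover have "(a*A)*(a*A*h) \<ge> 0" using aA h by simp
    ultimately show ?thesis by linarith
  qed
  ultimately have "k * exp (k*h) \<ge> exp h * (1 - a*A*(1+h))"
    by (smt (verit) exp_gt_zero mult.commute mult.left_commute mult_left_mono)
  hence "\<beta> * h * exp 1 * (k * exp (k*h)) \<ge> \<beta> * h * exp 1 * (exp h * (1 - a*A*(1+h)))"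
    using \<beta> h by (intro mult_left_mono) auto
  moreover have "\<beta> * h * exp 1 * (exp h * (1 - a*A*(1+h))) = Q * (1 - a*A*(1+h))"
    using Q by (simp add: exp_add algebra_simps)
  moreover have "Q * (1 - a*A*(1+h)) > Q * (1/Q)" using sm Q by (intro mult_strict_left_mono) auto
  moreover have "Q * (1/Q) = 1" using Q(2) by simp
  ultimately have "\<beta> * h * exp 1 * (k * exp (k*h)) > 1" by linarith
  then show ?thesis unfolding k_def[symmetric] by (simp add: algebra_simps)
qed

lemma main_case:
  fixes y y' y'' G :: "real \<Rightarrow> real"
  assumes h: "h > 0" and a: "a > 0" and \<beta>: "\<beta> > 0" and B: "B \<ge> 0" and \<eta>: "\<eta> > 0"
    and dy: "\<And>t. (y has_real_derivative y' t) (at t)"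
    and dy': "\<And>t. (y' has_real_derivative y'' t) (at t)"
    and eq: "\<And>t. a * y'' t - y' t = y t + G t"
    and Gb: "\<And>t. 0 \<le> y (t - h) \<Longrightarrow> y (t - h) < \<eta> \<Longrightarrow> \<beta> * y (t - h) \<le> G t \<and> G t \<le> B * y (t - h)"
    and nnz: "\<And>t. t \<ge> z \<Longrightarrow> y t \<ge> 0"
    and conv: "\<And>t. t \<ge> Tc \<Longrightarrow> \<bar>y t\<bar> < \<eta>"
    and bnd: "\<And>t. \<bar>y t\<bar> \<le> M"
    and sm1: "exp (-(h/4)/a) \<le> 1/2"
    and sm2: "(1/(1 + a*(1 + B*(8/(\<beta>*h))^2))) * \<beta> * exp ((1/(1 + a*(1 + B*(8/(\<beta>*h))^2))) * h) * h * exp 1 > 1"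
  shows "\<exists>s. \<forall>t>s. y t = 0"
proof -
  define T1 where "T1 = max z Tc + h"
  have nn: "y t \<ge> 0" if "t \<ge> T1 - h" for t using nnz[of t] that unfolding T1_def by simp
  have GG: "\<beta> * y (t - h) \<le> G t \<and> G t \<le> B * y (t - h)" if "t \<ge> T1" for t
  proof (rule Gb)
    show "0 \<le> y (t - h)" using nn[of "t-h"] that by simp
    have "Tc \<le> t - h" using that unfolding T1_def by simp
    then show "y (t - h) < \<eta>" using conv[of "t-h"] by simp
  qed
  define F where "F t = y t + G t" for t
  have eqF: "a * y'' t - y' t = F t" if "t \<ge> T1" for t using eq unfolding F_def by simp
  have Fpos: "F t \<ge> 0" if "t \<ge> T1" for t
  proof -
    have "\<beta> * y (t - h) \<ge> 0" using nn[of "t-h"] that \<beta> by simp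
    then show ?thesis unfolding F_def using GG[OF that] nn[of t] that h by simp
  qed
  have D: "y' t \<le> 0" if "t \<ge> T1" for t
    using y_decr[of a y y' y'' T1 F M t, OF a dy dy' eqF Fpos bnd that] .
  have mono: "y u \<le> y s" if "T1 \<le> s" "s \<le> u" for s u
    by (rule nonincr[of s u y y']) (use dy D that in auto)
  show ?thesis
  proof (cases "\<exists>t1\<ge>T1. y t1 \<le> 0")
    case True
    then obtain t1 where t1: "t1 \<ge> T1" "y t1 \<le> 0" by blast
    have "y t = 0" if "t > t1" for t
      using mono[of t1 t] nn[of t] t1 that h by simp
    then show ?thesis by blast
  next
    case False
    hence pos: "y t > 0" if "t \<ge> T1" for t using that by force
    have False
      by (rule core[OF h a \<beta> B dy dy' eq _ _ nn pos bnd sm1 sm2]) (use GG in auto)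
    then show ?thesis ..
  qed
qed

theorem lemma16:
  fixes g :: "real \<Rightarrow> real" and h K :: real
  assumes "hypH g h K"
    and "bounded (range g)"
    and "deriv g K * h * exp (h + 1) < -1"
  shows "\<exists>\<epsilon>0>0. \<forall>\<epsilon>. 0 < \<epsilon> \<and> \<epsilon> < \<epsilon>0 \<longrightarrow>
     (\<forall>x :: real \<Rightarrow> real.
        (\<exists>x' x''. \<forall>t. (x has_real_derivative x' t) (at t) \<and>
                      (x' has_real_derivative x'' t) (at t) \<and>
                      \<epsilon>\<^sup>2 * x'' t - x' t - x t + g (x (t - h)) = 0)
        \<and> bounded (range x) \<and> \<not> (\<exists>c. \<forall>t. x t = c) \<and> (x \<longlongrightarrow> K) at_top
        \<longrightarrow> (\<forall>z. (\<exists>t\<ge>z. x t - K > 0) \<and> (\<exists>t\<ge>z. x t - K < 0)))"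
proof -
  from assms(1) have h: "h > 0" and K: "K > 0" and fixp: "{c. c \<ge> 0 \<and> g c = c} = {0, K}"
    and dif: "\<forall>x. g differentiable at x" unfolding hypH_def by auto
  have "K \<in> {c. c \<ge> 0 \<and> g c = c}" using fixp by simp
  hence gK: "g K = K" by simp
  define D where "D = deriv g K"
  have dD: "(g has_real_derivative D) (at K)"
    using dif DERIV_deriv_iff_real_differentiable unfolding D_def by blast
  define H where "H = h * exp (h + 1)"
  have H: "H > 0" unfolding H_def using h by simp
  define b where "b = - D"
  have hb: "b * H > 1" using assms(3) unfolding b_def H_def D_def by (simp add: mult.assoc)
  have b0: "b > 0"
  proof (rule ccontr)
    assume "\<not> b > 0"
    hence "b * H \<le> 0" using H by (simp add: mult_nonpos_nonneg)
    then show False using hb by simp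
  qed
  have iH: "1/H < b" using hb H by (simp add: divide_less_eq mult.commute)
  define \<beta> where "\<beta> = (b + 1/H) / 2"
  have "1/H > 0" using H by simp
  hence \<beta>0: "\<beta> > 0" unfolding \<beta>_def using b0 by (intro divide_pos_pos add_pos_pos) auto
  have \<beta>b: "\<beta> < b" unfolding \<beta>_def using iH by simp
  have \<beta>H: "\<beta> * H > 1"
  proof -
    have "1/H < \<beta>" unfolding \<beta>_def using iH by simp
    then show ?thesis using H by (simp add: divide_less_eq mult.commute)
  qed
  define r where "r = b - \<beta>"
  have r: "r > 0" unfolding r_def using \<beta>b by simp
  have "((\<lambda>y. (g y - g K) / (y - K)) \<longlongrightarrow> D) (at K)"
    using dD by (simp add: has_field_derivative_iff)
  then obtain \<eta> where \<eta>: "\<eta> > 0"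
    and q: "\<And>y. y \<noteq> K \<Longrightarrow> \<bar>y - K\<bar> < \<eta> \<Longrightarrow> \<bar>(g y - g K) / (y - K) - D\<bar> < r"
    using r unfolding LIM_eq by force
  define B where "B = b + r"
  have B: "B \<ge> 0" unfolding B_def using b0 r by simp
  have quot: "-B < (g c - K) / (c - K) \<and> (g c - K) / (c - K) < -\<beta>" if "c \<noteq> K" "\<bar>c - K\<bar> < \<eta>" for c
    using q[OF that] gK unfolding B_def r_def b_def by (simp add: abs_less_iff)
  have iso: "c = K" if "g c = K" "\<bar>c - K\<bar> < \<eta>" for c
  proof (rule ccontr)
    assume "c \<noteq> K"
    from quot[OF this that(2)] that(1) \<beta>0 show False by simp
  qed
  have Gp: "\<beta> * u \<le> K - g (K + u) \<and> K - g (K + u) \<le> B * u" if "0 \<le> u" "u < \<eta>" for u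
  proof (cases "u = 0")
    case True then show ?thesis using gK by simp
  next
    case False
    hence u: "u > 0" using that by simp
    have "-B < (g (K+u) - K) / u \<and> (g (K+u) - K) / u < -\<beta>"
      using quot[of "K+u"] u that by simp
    hence "-B * u < g (K+u) - K \<and> g (K+u) - K < -\<beta> * u"
      using u by (simp add: pos_less_divide_eq pos_divide_less_eq)
    then show ?thesis by simp
  qed
  have Gn: "\<beta> * u \<le> g (K - u) - K \<and> g (K - u) - K \<le> B * u" if "0 \<le> u" "u < \<eta>" for u
  proof (cases "u = 0")
    case True then show ?thesis using gK by simp
  next
    case False
    hence u: "u > 0" using that by simp
    have "-B < (g (K-u) - K) / (-u) \<and> (g (K-u) - K) / (-u) < -\<beta>"
      using quot[of "K-u"] u that by simp
    hence "\<beta> < (g (K-u) - K) / u \<and> (g (K-u) - K) / u < B" by simp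
    hence "\<beta> * u < g (K-u) - K \<and> g (K-u) - K < B * u"
      using u by (simp add: pos_less_divide_eq pos_divide_less_eq)
    then show ?thesis by auto
  qed
  define A where "A = 1 + B*(8/(\<beta>*h))^2"
  have A: "A \<ge> 1" unfolding A_def using B by simp
  define Q where "Q = \<beta> * h * exp (h + 1)"
  have Q: "Q > 1" using \<beta>H unfolding Q_def H_def by (simp add: mult.assoc)
  define c0 where "c0 = (1 - 1/Q) / (A * (1 + h))"
  have c0: "c0 > 0" unfolding c0_def using Q A h by simp
  define \<epsilon>0 where "\<epsilon>0 = min 1 (min (h/4) c0)"
  have e0: "\<epsilon>0 > 0" unfolding \<epsilon>0_def using h c0 by simp
  show ?thesis
  proof (rule exI[of _ \<epsilon>0], intro conjI allI impI e0)
    fix \<epsilon> :: real and x :: "real \<Rightarrow> real" and z :: real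
    assume e: "0 < \<epsilon> \<and> \<epsilon> < \<epsilon>0"
    assume hx: "(\<exists>x' x''. \<forall>t. (x has_real_derivative x' t) (at t) \<and>
                      (x' has_real_derivative x'' t) (at t) \<and>
                      \<epsilon>\<^sup>2 * x'' t - x' t - x t + g (x (t - h)) = 0)
        \<and> bounded (range x) \<and> \<not> (\<exists>c. \<forall>t. x t = c) \<and> (x \<longlongrightarrow> K) at_top"
    then obtain x' x'' where dx: "\<And>t. (x has_real_derivative x' t) (at t)"
      and dx': "\<And>t. (x' has_real_derivative x'' t) (at t)"
      and eqx: "\<And>t. \<epsilon>\<^sup>2 * x'' t - x' t - x t + g (x (t - h)) = 0" by blast
    from hx have nc: "\<not> (\<exists>c. \<forall>t. x t = c)" and lim: "(x \<longlongrightarrow> K) at_top"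
      and bd: "bounded (range x)" by auto
    obtain Mx where Mx: "\<And>t. \<bar>x t\<bar> \<le> Mx" using bd unfolding bounded_real by blast
    have "eventually (\<lambda>t. dist (x t) K < \<eta>) at_top" using lim \<eta> by (simp add: tendsto_iff)
    then obtain T0 where T0: "\<And>t. t \<ge> T0 \<Longrightarrow> \<bar>x t - K\<bar> < \<eta>"
      unfolding eventually_at_top_linorder dist_real_def by blast
    define a where "a = \<epsilon>\<^sup>2"
    have a: "a > 0" unfolding a_def using e by simp
    have "a \<le> \<epsilon>" unfolding a_def power2_eq_square using e unfolding \<epsilon>0_def
      by (simp add: mult_left_le)
    hence ae: "a < \<epsilon>0" using e by simp
    have sm1: "exp (-(h/4)/a) \<le> 1/2"
    proof -
      have "a < h/4" using ae unfolding \<epsilon>0_def by simp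
      hence "1 \<le> (h/4)/a" using a by (simp add: le_divide_eq)
      hence "exp (-(h/4)/a) \<le> exp (-1)" by simp
      also have "exp (-1::real) = 1 / exp 1" using exp_minus[of "1::real"] by (simp add: inverse_eq_divide)
      also have "1 / exp (1::real) \<le> 1/2" using exp_ge_add_one_self[of 1] by (simp add: divide_le_eq)
      finally show ?thesis .
    qed
    have sm: "a * A * (1 + h) < 1 - 1/Q"
    proof -
      have "a < c0" using ae unfolding \<epsilon>0_def by simp
      hence "a * (A * (1 + h)) < 1 - 1/Q" unfolding c0_def using A h
        by (simp add: pos_less_divide_eq)
      then show ?thesis by (simp add: mult.assoc)
    qed
    have sm2: "(1/(1 + a*(1 + B*(8/(\<beta>*h))^2))) * \<beta> * exp ((1/(1 + a*(1 + B*(8/(\<beta>*h))^2))) * h) * h * exp 1 > 1"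
      using small[OF h \<beta>0 A a Q_def Q sm] unfolding A_def .
    have const: "False" if "\<And>t. t > s \<Longrightarrow> x t = K" for s
    proof -
      have "x t = K" for t
        by (rule const_all[OF h \<eta> iso dx dx' eqx that])
      then show False using nc by blast
    qed
    show "\<exists>t\<ge>z. x t - K > 0"
    proof (rule ccontr)
      assume "\<not> (\<exists>t\<ge>z. x t - K > 0)"
      hence nnz: "\<And>t. t \<ge> z \<Longrightarrow> K - x t \<ge> 0" by force
      have d1: "((\<lambda>t. K - x t) has_real_derivative - x' t) (at t)" for t
        by (rule derivative_eq_intros dx refl | simp)+
      have d2: "((\<lambda>t. - x' t) has_real_derivative - x'' t) (at t)" for t
        by (rule derivative_eq_intros dx' refl | simp)+
      have e1: "a * - x'' t - - x' t = K - x t + (g (x (t - h)) - K)" for t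
        using eqx[of t] unfolding a_def by simp
      have g1: "\<beta> * (K - x (t - h)) \<le> g (x (t - h)) - K \<and> g (x (t - h)) - K \<le> B * (K - x (t - h))"
        if "0 \<le> K - x (t - h)" "K - x (t - h) < \<eta>" for t
        using Gn[OF that] by simp
      have c1: "\<bar>K - x t\<bar> < \<eta>" if "t \<ge> T0" for t using T0[OF that] by (simp add: abs_minus_commute)
      have b1: "\<bar>K - x t\<bar> \<le> Mx + K" for t using Mx[of t] K by simp
      have "\<exists>s. \<forall>t>s. K - x t = 0"
        by (rule main_case[where y = "\<lambda>t. K - x t", OF h a \<beta>0 B \<eta> d1 d2 e1 g1 nnz c1 b1 sm1 sm2])
      then obtain s where "\<And>t. t > s \<Longrightarrow> x t = K" by auto
      then show False using const by blast
    qed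
    show "\<exists>t\<ge>z. x t - K < 0"
    proof (rule ccontr)
      assume "\<not> (\<exists>t\<ge>z. x t - K < 0)"
      hence nnz: "\<And>t. t \<ge> z \<Longrightarrow> x t - K \<ge> 0" by force
      have d1: "((\<lambda>t. x t - K) has_real_derivative x' t) (at t)" for t
        by (rule derivative_eq_intros dx refl | simp)+
      have e1: "a * x'' t - x' t = x t - K + (K - g (x (t - h)))" for t
        using eqx[of t] unfolding a_def by simp
      have g1: "\<beta> * (x (t - h) - K) \<le> K - g (x (t - h)) \<and> K - g (x (t - h)) \<le> B * (x (t - h) - K)"
        if "0 \<le> x (t - h) - K" "x (t - h) - K < \<eta>" for t
        using Gp[OF that] by simp
      have c1: "\<bar>x t - K\<bar> < \<eta>" if "t \<ge> T0" for t using T0[OF that] by simp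
      have b1: "\<bar>x t - K\<bar> \<le> Mx + K" for t using Mx[of t] K by simp
      have "\<exists>s. \<forall>t>s. x t - K = 0"
        by (rule main_case[where y = "\<lambda>t. x t - K", OF h a \<beta>0 B \<eta> d1 dx' e1 g1 nnz c1 b1 sm1 sm2])
      then obtain s where "\<And>t. t > s \<Longrightarrow> x t = K" by auto
      then show False using const by blast
    qed
  qed
qed

end
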